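(* Let $\mathcal{R}:\mathcal{D}\to\mathcal{S}$ be a deletion $(\varepsilon,\delta)$-DP local randomizer with reference distribution $\rho$. Then there exists a randomizer $\mathcal{R}':\mathcal{D}\to\mathcal{S}$ that is a deletion $\varepsilon$-DP local randomizer with the same reference distribution $\rho$, such that for all $x\in\mathcal{D}$, $\mathrm{TV}(\mathcal{R}(x),\mathcal{R}'(x))\le\delta$. In particular, $\mathcal{R}'$ is a (replacement) $2\varepsilon$-DP local randomizer.
   Context: Two random variables $P,Q$ on the same space are $(\varepsilon,\delta)$-indistinguishable if for every event $E$, $e^{-\varepsilon}(\Pr(Q\in E)-\delta)\le\Pr(P\in E)\le e^{\varepsilon}\Pr(Q\in E)+\delta$. An algorithm $\mathcal{R}:\mathcal{D}\to\mathcal{S}$ is a deletion $(\varepsilon,\delta)$-DP local randomizer if there exists a distribution $\rho$ on $\mathcal{S}$ (the reference distribution) such that for all $x\in\mathcal{D}$, $\mathcal{R}(x)$ and $\rho$ are $(\varepsilon,\delta)$-indistinguishable; deletion $\varepsilon$-DP means $\delta=0$. A (replacement) $(\varepsilon,\delta)$-DP local randomizer is one for which $\mathcal{R}(x)$ and $\mathcal{R}(x')$ are $(\varepsilon,\delta)$-indistinguishable for all $x,x'\in\mathcal{D}$. $\mathrm{TV}$ denotes total variation distance. *)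

theory Defs
  imports "HOL-Probability.Probability"
begin

definition is_dist :: "'s measure \<Rightarrow> 's measure \<Rightarrow> bool" where
  "is_dist M P \<longleftrightarrow> prob_space P \<and> sets P = sets M"

definition indist :: "'s measure \<Rightarrow> real \<Rightarrow> real \<Rightarrow> 's measure \<Rightarrow> 's measure \<Rightarrow> bool" where
  "indist M \<epsilon> \<delta> P Q \<longleftrightarrow>
     (\<forall>E \<in> sets M.
        exp (-\<epsilon>) * (measure Q E - \<delta>) \<le> measure P E \<and>
        measure P E \<le> exp \<epsilon> * measure Q E + \<delta>)"

definition deletion_DP_LR ::
  "'s measure \<Rightarrow> real \<Rightarrow> real \<Rightarrow> ('d \<Rightarrow> 's measure) \<Rightarrow> 's measure \<Rightarrow> bool" where
  "deletion_DP_LR M \<epsilon> \<delta> R \<rho> \<longleftrightarrow>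
     is_dist M \<rho> \<and> (\<forall>x. is_dist M (R x)) \<and> (\<forall>x. indist M \<epsilon> \<delta> (R x) \<rho>)"

definition replacement_DP_LR ::
  "'s measure \<Rightarrow> real \<Rightarrow> real \<Rightarrow> ('d \<Rightarrow> 's measure) \<Rightarrow> bool" where
  "replacement_DP_LR M \<epsilon> \<delta> R \<longleftrightarrow>
     (\<forall>x. is_dist M (R x)) \<and> (\<forall>x x'. indist M \<epsilon> \<delta> (R x) (R x'))"

definition TV :: "'s measure \<Rightarrow> 's measure \<Rightarrow> 's measure \<Rightarrow> real" where
  "TV M P Q = (SUP E \<in> sets M. \<bar>measure P E - measure Q E\<bar>)"

end

theory Submission
  imports Defs
begin


lemma tv_aux:
  fixes f g h :: "'a \<Rightarrow> real"
  assumes fi: "integrable N f" and gi: "integrable N g" and hi: "integrable N h"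
    and eq: "integral\<^sup>L N f = integral\<^sup>L N g"
    and le: "\<And>y. y \<in> space N \<Longrightarrow> f y - h y \<le> g y"
    and hnn: "\<And>y. 0 \<le> h y" and hd: "integral\<^sup>L N h \<le> \<delta>"
    and E: "E \<in> sets N"
  shows "\<bar>(\<integral>y. f y * indicator E y \<partial>N) - (\<integral>y. g y * indicator E y \<partial>N)\<bar> \<le> \<delta>"
proof -
  have iF: "integrable N (\<lambda>y. f y * indicator E y)" "integrable N (\<lambda>y. g y * indicator E y)"
    using E fi gi by (auto intro!: integrable_real_mult_indicator)
  have "(\<integral>y. f y * indicator E y \<partial>N) - (\<integral>y. g y * indicator E y \<partial>N)
      = (\<integral>y. f y * indicator E y - g y * indicator E y \<partial>N)"
    using iF fi gi by (simp add: integral_diff)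
  also have "\<dots> \<le> integral\<^sup>L N h"
    using iF le hnn fi gi hi by (intro integral_mono) (auto split: split_indicator dest!: le)
  finally have 1: "(\<integral>y. f y * indicator E y \<partial>N) - (\<integral>y. g y * indicator E y \<partial>N) \<le> \<delta>"
    using hd by simp
  have "(\<integral>y. (f y - g y) - (f y * indicator E y - g y * indicator E y) \<partial>N)
      = (integral\<^sup>L N f - integral\<^sup>L N g) - ((\<integral>y. f y * indicator E y \<partial>N) - (\<integral>y. g y * indicator E y \<partial>N))"
    using iF fi gi by (simp add: integral_diff)
  moreover have "(\<integral>y. (f y - g y) - (f y * indicator E y - g y * indicator E y) \<partial>N) \<le> integral\<^sup>L N h"
    using iF le hnn fi gi hi by (intro integral_mono) (auto split: split_indicator dest!: le)
  ultimately have 2: "(\<integral>y. g y * indicator E y \<partial>N) - (\<integral>y. f y * indicator E y \<partial>N) \<le> \<delta>"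
    using hd eq by simp
  from 1 2 show ?thesis by linarith
qed

lemma core:
  fixes p q :: "'a \<Rightarrow> real"
  assumes fin: "finite_measure N"
    and pm[measurable]: "p \<in> borel_measurable N" and qm[measurable]: "q \<in> borel_measurable N"
    and pnn: "\<And>y. 0 \<le> p y" and qnn: "\<And>y. 0 \<le> q y"
    and pi: "integrable N p" and qi: "integrable N q"
    and p1: "integral\<^sup>L N p = 1" and q1: "integral\<^sup>L N q = 1"
    and up: "\<forall>E \<in> sets N. (\<integral>y. p y * indicator E y \<partial>N) \<le> exp \<epsilon> * (\<integral>y. q y * indicator E y \<partial>N) + \<delta>"
    and lo: "\<forall>E \<in> sets N. exp (-\<epsilon>) * ((\<integral>y. q y * indicator E y \<partial>N) - \<delta>) \<le> (\<integral>y. p y * indicator E y \<partial>N)"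
    and eps: "0 \<le> \<epsilon>" and del: "0 \<le> \<delta>"
  shows "\<exists>p'. p' \<in> borel_measurable N \<and> (\<forall>y. 0 \<le> p' y) \<and> integrable N p' \<and> integral\<^sup>L N p' = 1
     \<and> (\<forall>y. exp (-\<epsilon>) * q y \<le> p' y \<and> p' y \<le> exp \<epsilon> * q y)
     \<and> (\<forall>E\<in>sets N. \<bar>(\<integral>y. p y * indicator E y \<partial>N) - (\<integral>y. p' y * indicator E y \<partial>N)\<bar> \<le> \<delta>)"
proof -
  define c where "c = exp \<epsilon>"
  define d where "d = exp (-\<epsilon>)"
  have c1: "1 \<le> c" using eps by (simp add: c_def)
  have d1: "d \<le> 1" "0 < d" using eps by (auto simp: d_def)
  have dc: "d \<le> c" using c1 d1 by simp
  define h1 where "h1 = (\<lambda>y. max 0 (p y - c * q y))"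
  define h2 where "h2 = (\<lambda>y. max 0 (d * q y - p y))"
  define r where "r = (\<lambda>y. p y - h1 y + h2 y)"
  have h1i: "integrable N h1" unfolding h1_def using pi qi by auto
  have h2i: "integrable N h2" unfolding h2_def using pi qi by auto
  have ri: "integrable N r" unfolding r_def using pi h1i h2i by auto
  have h1m[measurable]: "h1 \<in> borel_measurable N" unfolding h1_def by measurable
  have h2m[measurable]: "h2 \<in> borel_measurable N" unfolding h2_def by measurable
  have rm[measurable]: "r \<in> borel_measurable N" unfolding r_def by measurable
  have h1nn: "\<And>y. 0 \<le> h1 y" and h2nn: "\<And>y. 0 \<le> h2 y" by (auto simp: h1_def h2_def)
  have rb: "\<And>y. d * q y \<le> r y \<and> r y \<le> c * q y \<and> p y - h1 y \<le> r y \<and> r y \<le> p y + h2 y"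
  proof -
    fix y
    have "d * q y \<le> c * q y" using dc qnn[of y] by (simp add: mult_right_mono)
    then show "d * q y \<le> r y \<and> r y \<le> c * q y \<and> p y - h1 y \<le> r y \<and> r y \<le> p y + h2 y"
      unfolding r_def h1_def h2_def by (auto simp: max_def)
  qed
  define a where "a = integral\<^sup>L N h1"
  define b where "b = integral\<^sup>L N h2"
  have a0: "0 \<le> a" unfolding a_def using h1nn by simp
  have b0: "0 \<le> b" unfolding b_def using h2nn by simp
  define A where "A = {y\<in>space N. c * q y < p y}"
  have Am: "A \<in> sets N" unfolding A_def by measurable
  have "a = (\<integral>y. p y * indicator A y - c * (q y * indicator A y) \<partial>N)"
    unfolding a_def by (rule Bochner_Integration.integral_cong) (auto simp: h1_def A_def split: split_indicator)
  also have "\<dots> = (\<integral>y. p y * indicator A y \<partial>N) - c * (\<integral>y. q y * indicator A y \<partial>N)"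
    using Am pi qi by (simp add: integral_diff integrable_real_mult_indicator)
  finally have aD: "a \<le> \<delta>" using bspec[OF up Am] by (simp add: c_def)
  define B where "B = {y\<in>space N. p y < d * q y}"
  have Bm: "B \<in> sets N" unfolding B_def by measurable
  have "b = (\<integral>y. d * (q y * indicator B y) - p y * indicator B y \<partial>N)"
    unfolding b_def by (rule Bochner_Integration.integral_cong) (auto simp: h2_def B_def split: split_indicator)
  also have "\<dots> = d * (\<integral>y. q y * indicator B y \<partial>N) - (\<integral>y. p y * indicator B y \<partial>N)"
    using Bm pi qi by (simp add: integral_diff integrable_real_mult_indicator)
  finally have "b \<le> d * \<delta>" using bspec[OF lo Bm] by (simp add: d_def algebra_simps)
  also have "\<dots> \<le> \<delta>" using d1 del by (simp add: mult_left_le_one_le)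
  finally have bD: "b \<le> \<delta>" .
  have rI: "integral\<^sup>L N r = 1 - a + b"
    unfolding r_def a_def b_def using pi h1i h2i p1 by (simp add: integral_diff integral_add)
  have qI: "\<And>k. integral\<^sup>L N (\<lambda>y. k * q y) = k" using q1 by simp
  show ?thesis
  proof (cases "b \<le> a")
    case True
    define U where "U = integral\<^sup>L N (\<lambda>y. c * q y - r y)"
    have U: "U = c - (1 - a + b)" unfolding U_def using qi ri rI q1 by (simp add: integral_diff)
    define t where "t = (if U = 0 then 0 else (a - b) / U)"
    have t0: "0 \<le> t" and t1: "t \<le> 1" and tU: "t * U = a - b"
      using True c1 U by (auto simp: t_def field_simps)
    define p' where "p' = (\<lambda>y. r y + t * (c * q y - r y))"
    have p'i: "integrable N p'" unfolding p'_def using ri qi by auto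
    have p'I: "integral\<^sup>L N p' = 1"
      unfolding p'_def using ri qi rI tU U_def by (simp add: integral_add integral_diff)
    have p'b: "\<And>y. r y \<le> p' y \<and> p' y \<le> c * q y"
    proof -
      fix y
      have "0 \<le> c * q y - r y" using rb[of y] by simp
      then have "0 \<le> t * (c * q y - r y)" "t * (c * q y - r y) \<le> c * q y - r y"
        using t0 t1 by (auto simp: mult_left_le_one_le)
      then show "r y \<le> p' y \<and> p' y \<le> c * q y" unfolding p'_def by simp
    qed
    show ?thesis
    proof (intro exI conjI allI ballI)
      show "p' \<in> borel_measurable N" unfolding p'_def by measurable
      show "integrable N p'" by fact
      show "integral\<^sup>L N p' = 1" by fact
      fix y
      show "exp (-\<epsilon>) * q y \<le> p' y" using rb[of y] p'b[of y] by (simp add: d_def)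
      show "p' y \<le> exp \<epsilon> * q y" using p'b[of y] by (simp add: c_def)
      show "0 \<le> p' y" using rb[of y] p'b[of y] mult_nonneg_nonneg[OF less_imp_le[OF d1(2)] qnn[of y]] by linarith
    next
      fix E assume E: "E \<in> sets N"
      show "\<bar>(\<integral>y. p y * indicator E y \<partial>N) - (\<integral>y. p' y * indicator E y \<partial>N)\<bar> \<le> \<delta>"
      proof (rule tv_aux[OF pi p'i h1i _ _ h1nn _ E])
        show "integral\<^sup>L N p = integral\<^sup>L N p'" using p1 p'I by simp
        show "integral\<^sup>L N h1 \<le> \<delta>" using aD a_def by simp
        fix y assume "y \<in> space N"
        show "p y - h1 y \<le> p' y" using rb[of y] p'b[of y] by linarith
      qed
    qed
  next
    case False
    define L where "L = integral\<^sup>L N (\<lambda>y. r y - d * q y)"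
    have L: "L = (1 - a + b) - d" unfolding L_def using qi ri rI q1 by (simp add: integral_diff)
    define s where "s = (b - a) / L"
    have s0: "0 \<le> s" and s1: "s \<le> 1" and sL: "s * L = b - a"
      using False d1 L by (auto simp: s_def field_simps)
    define p' where "p' = (\<lambda>y. r y - s * (r y - d * q y))"
    have p'i: "integrable N p'" unfolding p'_def using ri qi by auto
    have p'I: "integral\<^sup>L N p' = 1"
      unfolding p'_def using ri qi rI sL L_def by (simp add: integral_diff)
    have p'b: "\<And>y. d * q y \<le> p' y \<and> p' y \<le> r y"
    proof -
      fix y
      have "0 \<le> r y - d * q y" using rb[of y] by simp
      then have "0 \<le> s * (r y - d * q y)" "s * (r y - d * q y) \<le> r y - d * q y"
        using s0 s1 by (auto simp: mult_left_le_one_le)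
      then show "d * q y \<le> p' y \<and> p' y \<le> r y" unfolding p'_def by simp
    qed
    show ?thesis
    proof (intro exI conjI allI ballI)
      show "p' \<in> borel_measurable N" unfolding p'_def by measurable
      show "integrable N p'" by fact
      show "integral\<^sup>L N p' = 1" by fact
      fix y
      show "exp (-\<epsilon>) * q y \<le> p' y" using p'b[of y] by (simp add: d_def)
      show "p' y \<le> exp \<epsilon> * q y" using rb[of y] p'b[of y] by (simp add: c_def)
      show "0 \<le> p' y" using p'b[of y] mult_nonneg_nonneg[OF less_imp_le[OF d1(2)] qnn[of y]] by linarith
    next
      fix E assume E: "E \<in> sets N"
      have "\<bar>(\<integral>y. p' y * indicator E y \<partial>N) - (\<integral>y. p y * indicator E y \<partial>N)\<bar> \<le> \<delta>"
      proof (rule tv_aux[OF p'i pi h2i _ _ h2nn _ E])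
        show "integral\<^sup>L N p' = integral\<^sup>L N p" using p1 p'I by simp
        show "integral\<^sup>L N h2 \<le> \<delta>" using bD b_def by simp
        fix y assume "y \<in> space N"
        show "p' y - h2 y \<le> p y" using rb[of y] p'b[of y] by linarith
      qed
      then show "\<bar>(\<integral>y. p y * indicator E y \<partial>N) - (\<integral>y. p' y * indicator E y \<partial>N)\<bar> \<le> \<delta>"
        by simp
    qed
  qed
qed



lemma dens_emeasure:
  fixes f :: "'a \<Rightarrow> real"
  assumes fm[measurable]: "f \<in> borel_measurable N" and fnn: "\<And>y. 0 \<le> f y"
    and fi: "integrable N f" and E: "E \<in> sets N"
  shows "emeasure (density N (\<lambda>y. ennreal (f y))) E = ennreal (\<integral>y. f y * indicator E y \<partial>N)"
proof -
  have "emeasure (density N (\<lambda>y. ennreal (f y))) E = (\<integral>\<^sup>+y. ennreal (f y) * indicator E y \<partial>N)"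
    using E by (simp add: emeasure_density)
  also have "\<dots> = (\<integral>\<^sup>+y. ennreal (f y * indicator E y) \<partial>N)"
    by (intro nn_integral_cong) (auto split: split_indicator)
  also have "\<dots> = ennreal (\<integral>y. f y * indicator E y \<partial>N)"
    using E fi fnn by (intro nn_integral_eq_integral) (auto intro!: integrable_real_mult_indicator)
  finally show ?thesis .
qed

lemma dens_measure:
  fixes f :: "'a \<Rightarrow> real"
  assumes fm[measurable]: "f \<in> borel_measurable N" and fnn: "\<And>y. 0 \<le> f y"
    and fi: "integrable N f" and E: "E \<in> sets N"
  shows "measure (density N (\<lambda>y. ennreal (f y))) E = (\<integral>y. f y * indicator E y \<partial>N)"
proof -
  have "0 \<le> (\<integral>y. f y * indicator E y \<partial>N)" using fnn by (intro Bochner_Integration.integral_nonneg) auto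
  then show ?thesis unfolding measure_def using dens_emeasure[OF assms] by simp
qed

lemma density_real:
  assumes fin: "finite_measure N" and P: "prob_space P" and sP: "sets P = sets N"
    and ac: "absolutely_continuous N P"
  shows "\<exists>p. p \<in> borel_measurable N \<and> (\<forall>y. 0 \<le> p y) \<and> integrable N p \<and> P = density N (\<lambda>y. ennreal (p y))"
proof -
  interpret N: finite_measure N by fact
  interpret P: prob_space P by fact
  define p where "p = (\<lambda>y. enn2real (RN_deriv N P y))"
  have pm[measurable]: "p \<in> borel_measurable N" unfolding p_def by measurable
  have "AE y in N. RN_deriv N P y \<noteq> \<infinity>"
    by (rule N.RN_deriv_finite[OF _ ac sP]) unfold_locales
  then have ae: "AE y in N. RN_deriv N P y = ennreal (p y)"
    by eventually_elim (auto simp: p_def less_top)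
  have "P = density N (RN_deriv N P)" using N.density_RN_deriv[OF ac sP] by simp
  also have "\<dots> = density N (\<lambda>y. ennreal (p y))"
    by (rule density_cong) (use ae in auto)
  finally have Pd: "P = density N (\<lambda>y. ennreal (p y))" .
  have "emeasure (density N (\<lambda>y. ennreal (p y))) (space N) = (\<integral>\<^sup>+y. ennreal (p y) * indicator (space N) y \<partial>N)"
    by (rule emeasure_density) auto
  also have "\<dots> = (\<integral>\<^sup>+y. ennreal (p y) \<partial>N)"
    by (intro nn_integral_cong) simp
  finally have "(\<integral>\<^sup>+y. ennreal (p y) \<partial>N) = emeasure (density N (\<lambda>y. ennreal (p y))) (space N)" by simp
  also have "\<dots> = emeasure P (space P)" using Pd by simp
  also have "\<dots> = ennreal 1" by (simp add: P.emeasure_space_1)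
  finally have fin1: "(\<integral>\<^sup>+y. ennreal (p y) \<partial>N) = ennreal 1" .
  have "integrable N p"
    by (rule integrableI_nn_integral_finite[OF pm _ fin1]) (rule AE_I2, simp add: p_def)
  moreover have "\<forall>y. 0 \<le> p y" by (simp add: p_def)
  ultimately show ?thesis using pm Pd by blast
qed

lemma sup_props:
  assumes P: "prob_space P" and Q: "prob_space Q" and s: "sets Q = sets P"
  shows "finite_measure (sup_measure' P Q)" "sets (sup_measure' P Q) = sets P"
    "absolutely_continuous (sup_measure' P Q) P" "absolutely_continuous (sup_measure' P Q) Q"
proof -
  interpret P: prob_space P by fact
  interpret Q: prob_space Q by fact
  show ss: "sets (sup_measure' P Q) = sets P" using s by simp
  have "emeasure (sup_measure' P Q) (space P) \<le> emeasure P (space P) + emeasure Q (space P)"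
    unfolding emeasure_sup_measure'[OF s sets.top]
    by (intro SUP_least add_mono emeasure_mono) (auto simp: s dest: sets.sets_into_space)
  also have "\<dots> < \<infinity>" by (simp add: P.emeasure_space_1 Q.emeasure_space_1[unfolded sets_eq_imp_space_eq[OF s]])
  finally show "finite_measure (sup_measure' P Q)"
    using s by (intro finite_measureI) auto
  show "absolutely_continuous (sup_measure' P Q) P"
    unfolding absolutely_continuous_def
  proof
    fix X assume "X \<in> null_sets (sup_measure' P Q)"
    then show "X \<in> null_sets P" using le_emeasure_sup_measure'1[OF s, of X] ss
      by (auto simp: null_sets_def)
  qed
  show "absolutely_continuous (sup_measure' P Q) Q"
    unfolding absolutely_continuous_def
  proof
    fix X assume "X \<in> null_sets (sup_measure' P Q)"
    then show "X \<in> null_sets Q" using le_emeasure_sup_measure'2[OF s, of X] ss s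
      by (auto simp: null_sets_def)
  qed
qed

lemma single:
  assumes PD: "is_dist M P" and QD: "is_dist M Q" and ind: "indist M \<epsilon> \<delta> P Q" and eps: "0 \<le> \<epsilon>"
  shows "\<exists>P'. is_dist M P' \<and> indist M \<epsilon> 0 P' Q \<and> TV M P P' \<le> \<delta>"
proof -
  have Pp: "prob_space P" and sP: "sets P = sets M" using PD by (auto simp: is_dist_def)
  have Qp: "prob_space Q" and sQ: "sets Q = sets M" using QD by (auto simp: is_dist_def)
  have del: "0 \<le> \<delta>"
  proof -
    have "measure P {} \<le> exp \<epsilon> * measure Q {} + \<delta>" using ind unfolding indist_def by blast
    then show ?thesis by simp
  qed
  define N where "N = sup_measure' P Q"
  have sQP: "sets Q = sets P" using sP sQ by simp
  note sp = sup_props[OF Pp Qp sQP, folded N_def]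
  have sN: "sets N = sets M" using sp(2) sP by simp
  obtain p where p: "p \<in> borel_measurable N" "\<forall>y. 0 \<le> p y" "integrable N p"
      "P = density N (\<lambda>y. ennreal (p y))"
    using density_real[OF sp(1) Pp sp(2)[symmetric] sp(3)] by (elim exE conjE) (rule that, assumption+)
  obtain q where q: "q \<in> borel_measurable N" "\<forall>y. 0 \<le> q y" "integrable N q"
      "Q = density N (\<lambda>y. ennreal (q y))"
    using density_real[OF sp(1) Qp sQP[unfolded sp(2)[symmetric]] sp(4)] by (elim exE conjE) (rule that, assumption+)
  have mP: "\<And>E. E \<in> sets N \<Longrightarrow> measure P E = (\<integral>y. p y * indicator E y \<partial>N)"
    by (subst p(4), rule dens_measure[OF p(1) _ p(3)]) (use p(2) in auto)
  have mQ: "\<And>E. E \<in> sets N \<Longrightarrow> measure Q E = (\<integral>y. q y * indicator E y \<partial>N)"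
    by (subst q(4), rule dens_measure[OF q(1) _ q(3)]) (use q(2) in auto)
  have sps: "space N = space M" by (rule sets_eq_imp_space_eq[OF sN])
  have spP: "space P = space N" by (rule sets_eq_imp_space_eq) (simp add: sN sP)
  have spQ: "space Q = space N" by (rule sets_eq_imp_space_eq) (simp add: sN sQ)
  have int1: "\<And>f :: _ \<Rightarrow> real. integrable N f \<Longrightarrow> integral\<^sup>L N f = (\<integral>y. f y * indicator (space N) y \<partial>N)"
    by (intro Bochner_Integration.integral_cong) auto
  have p1: "integral\<^sup>L N p = 1"
  proof -
    have "integral\<^sup>L N p = (\<integral>y. p y * indicator (space N) y \<partial>N)" by (rule int1[OF p(3)])
    also have "\<dots> = measure P (space N)" by (rule mP[OF sets.top, symmetric])
    also have "\<dots> = 1" using prob_space.prob_space[OF Pp] spP by simp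
    finally show ?thesis .
  qed
  have q1: "integral\<^sup>L N q = 1"
  proof -
    have "integral\<^sup>L N q = (\<integral>y. q y * indicator (space N) y \<partial>N)" by (rule int1[OF q(3)])
    also have "\<dots> = measure Q (space N)" by (rule mQ[OF sets.top, symmetric])
    also have "\<dots> = 1" using prob_space.prob_space[OF Qp] spQ by simp
    finally show ?thesis .
  qed
  have upN: "\<forall>E \<in> sets N. (\<integral>y. p y * indicator E y \<partial>N) \<le> exp \<epsilon> * (\<integral>y. q y * indicator E y \<partial>N) + \<delta>"
  proof (intro ballI)
    fix E assume E: "E \<in> sets N"
    then have "E \<in> sets M" using sN by simp
    with ind have "measure P E \<le> exp \<epsilon> * measure Q E + \<delta>" unfolding indist_def by blast
    then show "(\<integral>y. p y * indicator E y \<partial>N) \<le> exp \<epsilon> * (\<integral>y. q y * indicator E y \<partial>N) + \<delta>"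
      using mP[OF E] mQ[OF E] by simp
  qed
  have loN: "\<forall>E \<in> sets N. exp (-\<epsilon>) * ((\<integral>y. q y * indicator E y \<partial>N) - \<delta>) \<le> (\<integral>y. p y * indicator E y \<partial>N)"
  proof (intro ballI)
    fix E assume E: "E \<in> sets N"
    then have "E \<in> sets M" using sN by simp
    with ind have "exp (-\<epsilon>) * (measure Q E - \<delta>) \<le> measure P E" unfolding indist_def by blast
    then show "exp (-\<epsilon>) * ((\<integral>y. q y * indicator E y \<partial>N) - \<delta>) \<le> (\<integral>y. p y * indicator E y \<partial>N)"
      using mP[OF E] mQ[OF E] by simp
  qed
  have pnn: "\<And>y. 0 \<le> p y" and qnn: "\<And>y. 0 \<le> q y" using p(2) q(2) by auto
  obtain p' where p': "p' \<in> borel_measurable N" "\<forall>y. 0 \<le> p' y" "integrable N p'" "integral\<^sup>L N p' = 1"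
     "\<forall>y. exp (-\<epsilon>) * q y \<le> p' y \<and> p' y \<le> exp \<epsilon> * q y"
     "\<forall>E\<in>sets N. \<bar>(\<integral>y. p y * indicator E y \<partial>N) - (\<integral>y. p' y * indicator E y \<partial>N)\<bar> \<le> \<delta>"
    using core[OF sp(1) p(1) q(1) pnn qnn p(3) q(3) p1 q1 upN loN eps del] by (elim exE conjE) (rule that, assumption+)
  define P' where "P' = density N (\<lambda>y. ennreal (p' y))"
  have mP': "\<And>E. E \<in> sets N \<Longrightarrow> measure P' E = (\<integral>y. p' y * indicator E y \<partial>N)"
    unfolding P'_def using p' by (intro dens_measure) auto
  have sP': "sets P' = sets M" unfolding P'_def using sN by simp
  have "emeasure P' (space P') = ennreal (\<integral>y. p' y * indicator (space N) y \<partial>N)"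
    unfolding P'_def using p' by (simp add: dens_emeasure)
  then have "prob_space P'" using int1[OF p'(3)] p'(4) by (intro prob_spaceI) simp
  then have D: "is_dist M P'" using sP' by (simp add: is_dist_def)
  have I: "indist M \<epsilon> 0 P' Q" unfolding indist_def
  proof (intro ballI conjI)
    fix E assume E: "E \<in> sets M"
    then have EN: "E \<in> sets N" using sN by simp
    have iq: "integrable N (\<lambda>y. q y * indicator E y)" using q(3) EN by (intro integrable_real_mult_indicator)
    have ip: "integrable N (\<lambda>y. p' y * indicator E y)" using p'(3) EN by (intro integrable_real_mult_indicator)
    have "exp (-\<epsilon>) * (\<integral>y. q y * indicator E y \<partial>N) = (\<integral>y. exp (-\<epsilon>) * (q y * indicator E y) \<partial>N)" by simp
    also have "\<dots> \<le> (\<integral>y. p' y * indicator E y \<partial>N)"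
      using iq ip p'(5) by (intro integral_mono) (auto split: split_indicator)
    finally show "exp (-\<epsilon>) * (measure Q E - 0) \<le> measure P' E" unfolding mQ[OF EN] mP'[OF EN] by simp
    have "(\<integral>y. p' y * indicator E y \<partial>N) \<le> (\<integral>y. exp \<epsilon> * (q y * indicator E y) \<partial>N)"
      using iq ip p'(5) by (intro integral_mono) (auto split: split_indicator)
    also have "\<dots> = exp \<epsilon> * (\<integral>y. q y * indicator E y \<partial>N)" by simp
    finally show "measure P' E \<le> exp \<epsilon> * measure Q E + 0" unfolding mQ[OF EN] mP'[OF EN] by simp
  qed
  have T: "TV M P P' \<le> \<delta>" unfolding TV_def
  proof (rule cSUP_least)
    show "sets M \<noteq> {}" using sets.empty_sets by blast
    fix E assume "E \<in> sets M"
    then have EN: "E \<in> sets N" using sN by simp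
    show "\<bar>measure P E - measure P' E\<bar> \<le> \<delta>" unfolding mP[OF EN] mP'[OF EN] using p'(6) EN by (rule bspec)
  qed
  show ?thesis by (rule exI[of _ P'], intro conjI D I T)
qed



lemma compose2:
  assumes A: "indist M \<epsilon> 0 P R" and B: "indist M \<epsilon> 0 Q R"
  shows "indist M (2 * \<epsilon>) 0 P Q"
  unfolding indist_def
proof (intro ballI conjI)
  fix E assume E: "E \<in> sets M"
  have a1: "exp (-\<epsilon>) * measure R E \<le> measure P E" "measure P E \<le> exp \<epsilon> * measure R E"
    using A E unfolding indist_def by auto
  have b1: "exp (-\<epsilon>) * measure R E \<le> measure Q E" "measure Q E \<le> exp \<epsilon> * measure R E"
    using B E unfolding indist_def by auto
  have e2: "exp (2 * \<epsilon>) = exp \<epsilon> * exp \<epsilon>" "exp (-(2 * \<epsilon>)) = exp (-\<epsilon>) * exp (-\<epsilon>)"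
    by (simp_all add: mult_exp_exp)
  have ed: "exp \<epsilon> * exp (-\<epsilon>) = 1" "exp (-\<epsilon>) * exp \<epsilon> = 1" by (simp_all add: mult_exp_exp)
  have "measure R E = exp \<epsilon> * (exp (-\<epsilon>) * measure R E)"
    using ed(1) by (metis mult.assoc mult_1_left)
  also have "\<dots> \<le> exp \<epsilon> * measure Q E"
    using b1(1) by (intro mult_left_mono) auto
  finally have r1: "measure R E \<le> exp \<epsilon> * measure Q E" .
  have "measure P E \<le> exp \<epsilon> * measure R E" by (fact a1(2))
  also have "\<dots> \<le> exp \<epsilon> * (exp \<epsilon> * measure Q E)"
    using r1 by (intro mult_left_mono) auto
  also have "\<dots> = exp (2 * \<epsilon>) * measure Q E" unfolding e2(1) by (rule mult.assoc[symmetric])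
  finally show "measure P E \<le> exp (2 * \<epsilon>) * measure Q E + 0" by simp
  have "exp (-\<epsilon>) * measure Q E \<le> exp (-\<epsilon>) * (exp \<epsilon> * measure R E)"
    using b1(2) by (intro mult_left_mono) auto
  also have "\<dots> = measure R E"
    using ed(2) by (metis mult.assoc mult_1_left)
  finally have r2: "exp (-\<epsilon>) * measure Q E \<le> measure R E" .
  have "exp (-(2 * \<epsilon>)) * measure Q E = exp (-\<epsilon>) * (exp (-\<epsilon>) * measure Q E)"
    unfolding e2(2) by (rule mult.assoc)
  also have "\<dots> \<le> exp (-\<epsilon>) * measure R E"
    using r2 by (intro mult_left_mono) auto
  also have "\<dots> \<le> measure P E" by (fact a1(1))
  finally show "exp (-(2 * \<epsilon>)) * (measure Q E - 0) \<le> measure P E" by simp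
qed

theorem lemma3p7:
  fixes M :: "'s measure" and R :: "'d \<Rightarrow> 's measure" and \<rho> :: "'s measure"
    and \<epsilon> \<delta> :: real
  assumes "0 \<le> \<epsilon>"
    and "deletion_DP_LR M \<epsilon> \<delta> R \<rho>"
  shows "\<exists>R' :: 'd \<Rightarrow> 's measure.
           deletion_DP_LR M \<epsilon> 0 R' \<rho> \<and>
           (\<forall>x. TV M (R x) (R' x) \<le> \<delta>) \<and>
           replacement_DP_LR M (2 * \<epsilon>) 0 R'"
proof -
  have rho: "is_dist M \<rho>" and Rd: "\<And>x. is_dist M (R x)" and Ri: "\<And>x. indist M \<epsilon> \<delta> (R x) \<rho>"
    using assms(2) unfolding deletion_DP_LR_def by auto
  have "\<forall>x. \<exists>P'. is_dist M P' \<and> indist M \<epsilon> 0 P' \<rho> \<and> TV M (R x) P' \<le> \<delta>"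
    by (intro allI single[OF Rd rho Ri assms(1)])
  from choice[OF this] obtain R' where R0: "\<forall>x. is_dist M (R' x) \<and> indist M \<epsilon> 0 (R' x) \<rho> \<and> TV M (R x) (R' x) \<le> \<delta>"
    by (elim exE) (rule that)
  have R': "\<And>x. is_dist M (R' x) \<and> indist M \<epsilon> 0 (R' x) \<rho> \<and> TV M (R x) (R' x) \<le> \<delta>"
    using R0 by (rule spec)
  show ?thesis
  proof (intro exI conjI allI)
    show "deletion_DP_LR M \<epsilon> 0 R' \<rho>" using rho R' unfolding deletion_DP_LR_def by auto
    show "\<And>x. TV M (R x) (R' x) \<le> \<delta>" using R' by auto
    show "replacement_DP_LR M (2 * \<epsilon>) 0 R'" unfolding replacement_DP_LR_def
    proof (intro conjI allI)
      fix x show "is_dist M (R' x)" using R'[of x] by blast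
    next
      fix x x' show "indist M (2 * \<epsilon>) 0 (R' x) (R' x')"
        using R'[of x] R'[of x'] by (intro compose2[of M \<epsilon> _ \<rho>]) blast+
    qed
  qed
qed

end
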